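(* Let $(H,B_1,B_2)$ be a Rota-Baxter system of Hopf algebras with descendent Hopf algebra $H_{B_1,B_2}$ and let $A$ be a unital commutative algebra. Then the maps $\mathcal{B}_1,\mathcal{B}_2:\mathrm{Char}(H,A)\to\mathrm{Char}(H_{B_1,B_2},A)$, $\mathcal{B}_i(f)(a)=f(B_i(a))$ for $a\in H_1$, are group homomorphisms.
   Context: $\mathbb{F}$ is a field of characteristic $0$; Sweedler notation $\Delta(a)=a_1\otimes a_2$. A Rota-Baxter system of Hopf algebras is a triple $(H,B_1,B_2)$ with $(H,\cdot,1,\Delta,\epsilon,S)$ a cocommutative Hopf algebra, $B_1,B_2$ coalgebra homomorphisms with $B_1(1)=B_2(1)=1$, and for all $a,b\in H$: $B_1(a)B_1(b)=B_1(B_1(a_1)bS(B_2(a_2)))$, $B_2(a)B_2(b)=B_2(B_1(a_1)bS(B_2(a_2)))$. Descendent operation $a\circ b=B_1(a_1)bS(B_2(a_2))$, cocycle $\sigma(a)=B_1(a_1)S(B_2(a_2))$, $H_1=\operatorname{Im}(\sigma)$; $H_{B_1,B_2}$ is the Hopf algebra $H_1$ with product $\circ$, unit $1$, restricted $\Delta,\epsilon$, antipode $T(a)=S(B_1(a_1))B_2(a_2)$. Convolution: $(f\ast g)(a)=f(a_1)g(a_2)$. $\mathrm{Char}(H,A)$ is the group under $\ast$ of algebra homomorphisms $H\to A$; $\mathrm{Char}(H_{B_1,B_2},A)$ is the group under convolution (w.r.t. the coproduct of $H_1$) of algebra homomorphisms $(H_1,\circ,1)\to A$. *)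

theory Defs
  imports Complex_Main "HOL-Algebra.Group"
begin

text \<open>
Tensors in H (x) H are represented by finite lists of pairs (sum of x (x) y), and two
such lists denote the same tensor iff every bilinear functional H x H -> k takes the
same value on them (over a field this is exactly equality in H (x) H).  Similarly for
H (x) H (x) H with trilinear functionals.
\<close>

definition bilin_fun :: "('k::field \<Rightarrow> 'h::ab_group_add \<Rightarrow> 'h) \<Rightarrow> ('h \<Rightarrow> 'h \<Rightarrow> 'k) \<Rightarrow> bool" where
  "bilin_fun sH \<phi> \<longleftrightarrow>
     (\<forall>y. Vector_Spaces.linear sH (*) (\<lambda>x. \<phi> x y)) \<and> (\<forall>x. Vector_Spaces.linear sH (*) (\<phi> x))"

definition trilin_fun :: "('k::field \<Rightarrow> 'h::ab_group_add \<Rightarrow> 'h) \<Rightarrow> ('h \<Rightarrow> 'h \<Rightarrow> 'h \<Rightarrow> 'k) \<Rightarrow> bool" where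
  "trilin_fun sH \<phi> \<longleftrightarrow>
     (\<forall>y z. Vector_Spaces.linear sH (*) (\<lambda>x. \<phi> x y z)) \<and>
     (\<forall>x z. Vector_Spaces.linear sH (*) (\<lambda>y. \<phi> x y z)) \<and>
     (\<forall>x y. Vector_Spaces.linear sH (*) (\<lambda>z. \<phi> x y z))"

definition teq2 :: "('k::field \<Rightarrow> 'h::ab_group_add \<Rightarrow> 'h) \<Rightarrow> ('h \<times> 'h) list \<Rightarrow> ('h \<times> 'h) list \<Rightarrow> bool" where
  "teq2 sH T U \<longleftrightarrow> (\<forall>\<phi>. bilin_fun sH \<phi> \<longrightarrow>
      sum_list (map (\<lambda>(x, y). \<phi> x y) T) = sum_list (map (\<lambda>(x, y). \<phi> x y) U))"

definition teq3 :: "('k::field \<Rightarrow> 'h::ab_group_add \<Rightarrow> 'h) \<Rightarrow> ('h \<times> 'h \<times> 'h) list \<Rightarrow> ('h \<times> 'h \<times> 'h) list \<Rightarrow> bool" where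
  "teq3 sH T U \<longleftrightarrow> (\<forall>\<phi>. trilin_fun sH \<phi> \<longrightarrow>
      sum_list (map (\<lambda>(x, y, z). \<phi> x y z) T) = sum_list (map (\<lambda>(x, y, z). \<phi> x y z) U))"

definition tmult :: "('h::times \<times> 'h) list \<Rightarrow> ('h \<times> 'h) list \<Rightarrow> ('h \<times> 'h) list" where
  "tmult T U = concat (map (\<lambda>(x, y). map (\<lambda>(x', y'). (x * x', y * y')) U) T)"

definition k_algebra :: "('k::field \<Rightarrow> 'r::ring_1 \<Rightarrow> 'r) \<Rightarrow> bool" where
  "k_algebra s \<longleftrightarrow> vector_space s \<and>
     (\<forall>c x y. s c (x * y) = s c x * y \<and> s c (x * y) = x * s c y)"

definition cocomm_hopf_algebra ::
  "('k::field \<Rightarrow> 'h::ring_1 \<Rightarrow> 'h) \<Rightarrow> ('h \<Rightarrow> ('h \<times> 'h) list) \<Rightarrow> ('h \<Rightarrow> 'k) \<Rightarrow> ('h \<Rightarrow> 'h) \<Rightarrow> bool" where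
  "cocomm_hopf_algebra sH \<Delta> \<epsilon> S \<longleftrightarrow>
     k_algebra sH \<and>
     \<comment> \<open>Delta is linear\<close>
     (\<forall>a b. teq2 sH (\<Delta> (a + b)) (\<Delta> a @ \<Delta> b)) \<and>
     (\<forall>c a. teq2 sH (\<Delta> (sH c a)) (map (\<lambda>(x, y). (sH c x, y)) (\<Delta> a))) \<and>
     \<comment> \<open>coassociativity\<close>
     (\<forall>a. teq3 sH
        (concat (map (\<lambda>(x, y). map (\<lambda>(x1, x2). (x1, x2, y)) (\<Delta> x)) (\<Delta> a)))
        (concat (map (\<lambda>(x, y). map (\<lambda>(y1, y2). (x, y1, y2)) (\<Delta> y)) (\<Delta> a)))) \<and>
     \<comment> \<open>counit\<close>
     Vector_Spaces.linear sH (*) \<epsilon> \<and>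
     (\<forall>a. sum_list (map (\<lambda>(x, y). sH (\<epsilon> x) y) (\<Delta> a)) = a) \<and>
     (\<forall>a. sum_list (map (\<lambda>(x, y). sH (\<epsilon> y) x) (\<Delta> a)) = a) \<and>
     \<comment> \<open>Delta and eps are algebra maps\<close>
     (\<forall>a b. teq2 sH (\<Delta> (a * b)) (tmult (\<Delta> a) (\<Delta> b))) \<and>
     teq2 sH (\<Delta> 1) [(1, 1)] \<and>
     (\<forall>a b. \<epsilon> (a * b) = \<epsilon> a * \<epsilon> b) \<and> \<epsilon> 1 = 1 \<and>
     \<comment> \<open>antipode\<close>
     Vector_Spaces.linear sH sH S \<and>
     (\<forall>a. sum_list (map (\<lambda>(x, y). S x * y) (\<Delta> a)) = sH (\<epsilon> a) 1) \<and>
     (\<forall>a. sum_list (map (\<lambda>(x, y). x * S y) (\<Delta> a)) = sH (\<epsilon> a) 1) \<and>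
     \<comment> \<open>cocommutativity\<close>
     (\<forall>a. teq2 sH (\<Delta> a) (map (\<lambda>(x, y). (y, x)) (\<Delta> a)))"

definition coalg_hom ::
  "('k::field \<Rightarrow> 'h::ring_1 \<Rightarrow> 'h) \<Rightarrow> ('h \<Rightarrow> ('h \<times> 'h) list) \<Rightarrow> ('h \<Rightarrow> 'k) \<Rightarrow> ('h \<Rightarrow> 'h) \<Rightarrow> bool" where
  "coalg_hom sH \<Delta> \<epsilon> B \<longleftrightarrow>
     Vector_Spaces.linear sH sH B \<and>
     (\<forall>a. teq2 sH (\<Delta> (B a)) (map (\<lambda>(x, y). (B x, B y)) (\<Delta> a))) \<and>
     (\<forall>a. \<epsilon> (B a) = \<epsilon> a)"

definition desc_op :: "('h \<Rightarrow> ('h \<times> 'h) list) \<Rightarrow> ('h \<Rightarrow> 'h) \<Rightarrow> ('h \<Rightarrow> 'h) \<Rightarrow> ('h \<Rightarrow> 'h)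
     \<Rightarrow> 'h::ring_1 \<Rightarrow> 'h \<Rightarrow> 'h" where
  "desc_op \<Delta> S B1 B2 a b = sum_list (map (\<lambda>(x, y). B1 x * b * S (B2 y)) (\<Delta> a))"

definition cocycle :: "('h \<Rightarrow> ('h \<times> 'h) list) \<Rightarrow> ('h \<Rightarrow> 'h) \<Rightarrow> ('h \<Rightarrow> 'h) \<Rightarrow> ('h \<Rightarrow> 'h)
     \<Rightarrow> 'h::ring_1 \<Rightarrow> 'h" where
  "cocycle \<Delta> S B1 B2 a = sum_list (map (\<lambda>(x, y). B1 x * S (B2 y)) (\<Delta> a))"

definition H1 :: "('h \<Rightarrow> ('h \<times> 'h) list) \<Rightarrow> ('h \<Rightarrow> 'h) \<Rightarrow> ('h \<Rightarrow> 'h) \<Rightarrow> ('h \<Rightarrow> 'h) \<Rightarrow> 'h::ring_1 set" where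
  "H1 \<Delta> S B1 B2 = range (cocycle \<Delta> S B1 B2)"

definition rota_baxter_system ::
  "('k::field_char_0 \<Rightarrow> 'h::ring_1 \<Rightarrow> 'h) \<Rightarrow> ('h \<Rightarrow> ('h \<times> 'h) list) \<Rightarrow> ('h \<Rightarrow> 'k) \<Rightarrow> ('h \<Rightarrow> 'h)
     \<Rightarrow> ('h \<Rightarrow> 'h) \<Rightarrow> ('h \<Rightarrow> 'h) \<Rightarrow> bool" where
  "rota_baxter_system sH \<Delta> \<epsilon> S B1 B2 \<longleftrightarrow>
     cocomm_hopf_algebra sH \<Delta> \<epsilon> S \<and>
     coalg_hom sH \<Delta> \<epsilon> B1 \<and> coalg_hom sH \<Delta> \<epsilon> B2 \<and> B1 1 = 1 \<and> B2 1 = 1 \<and>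
     (\<forall>a b. B1 a * B1 b = B1 (desc_op \<Delta> S B1 B2 a b)) \<and>
     (\<forall>a b. B2 a * B2 b = B2 (desc_op \<Delta> S B1 B2 a b))"

definition comm_k_algebra :: "('k::field \<Rightarrow> 'a::comm_ring_1 \<Rightarrow> 'a) \<Rightarrow> bool" where
  "comm_k_algebra sA \<longleftrightarrow> k_algebra sA"

definition conv :: "('h \<Rightarrow> ('h \<times> 'h) list) \<Rightarrow> ('h \<Rightarrow> 'a::comm_ring_1) \<Rightarrow> ('h \<Rightarrow> 'a) \<Rightarrow> 'h \<Rightarrow> 'a" where
  "conv \<Delta> f g a = sum_list (map (\<lambda>(x, y). f x * g y) (\<Delta> a))"

definition CharH ::
  "('k::field \<Rightarrow> 'h::ring_1 \<Rightarrow> 'h) \<Rightarrow> ('h \<Rightarrow> ('h \<times> 'h) list) \<Rightarrow> ('h \<Rightarrow> 'k)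
     \<Rightarrow> ('k \<Rightarrow> 'a::comm_ring_1 \<Rightarrow> 'a) \<Rightarrow> ('h \<Rightarrow> 'a) monoid" where
  "CharH sH \<Delta> \<epsilon> sA =
     \<lparr> carrier = {f. Vector_Spaces.linear sH sA f \<and> (\<forall>a b. f (a * b) = f a * f b) \<and> f 1 = 1},
       mult = conv \<Delta>,
       one = (\<lambda>a. sA (\<epsilon> a) 1) \<rparr>"

text \<open>Char(H_{B1,B2},A): algebra homomorphisms (H1, o, 1) -> A, represented as functions
  on H that are extensional (undefined) outside H1.  Convolution uses the coproduct of H1,
  i.e. Delta a written as a tensor with both legs in H1.\<close>
definition convB ::
  "('k::field \<Rightarrow> 'h::ring_1 \<Rightarrow> 'h) \<Rightarrow> ('h \<Rightarrow> ('h \<times> 'h) list) \<Rightarrow> ('h \<Rightarrow> 'h) \<Rightarrow> ('h \<Rightarrow> 'h) \<Rightarrow> ('h \<Rightarrow> 'h)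
     \<Rightarrow> ('h \<Rightarrow> 'a::comm_ring_1) \<Rightarrow> ('h \<Rightarrow> 'a) \<Rightarrow> 'h \<Rightarrow> 'a" where
  "convB sH \<Delta> S B1 B2 f g = restrict (\<lambda>a. SOME v. \<exists>T.
       set T \<subseteq> H1 \<Delta> S B1 B2 \<times> H1 \<Delta> S B1 B2 \<and> teq2 sH T (\<Delta> a) \<and>
       v = sum_list (map (\<lambda>(x, y). f x * g y) T)) (H1 \<Delta> S B1 B2)"

definition CharHB ::
  "('k::field \<Rightarrow> 'h::ring_1 \<Rightarrow> 'h) \<Rightarrow> ('h \<Rightarrow> ('h \<times> 'h) list) \<Rightarrow> ('h \<Rightarrow> 'k) \<Rightarrow> ('h \<Rightarrow> 'h)
     \<Rightarrow> ('h \<Rightarrow> 'h) \<Rightarrow> ('h \<Rightarrow> 'h) \<Rightarrow> ('k \<Rightarrow> 'a::comm_ring_1 \<Rightarrow> 'a) \<Rightarrow> ('h \<Rightarrow> 'a) monoid" where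
  "CharHB sH \<Delta> \<epsilon> S B1 B2 sA =
     \<lparr> carrier = {f. f \<in> extensional (H1 \<Delta> S B1 B2) \<and>
         (\<forall>x\<in>H1 \<Delta> S B1 B2. \<forall>y\<in>H1 \<Delta> S B1 B2. f (x + y) = f x + f y) \<and>
         (\<forall>c. \<forall>x\<in>H1 \<Delta> S B1 B2. f (sH c x) = sA c (f x)) \<and>
         (\<forall>x\<in>H1 \<Delta> S B1 B2. \<forall>y\<in>H1 \<Delta> S B1 B2. f (desc_op \<Delta> S B1 B2 x y) = f x * f y) \<and>
         f 1 = 1},
       mult = convB sH \<Delta> S B1 B2,
       one = restrict (\<lambda>a. sA (\<epsilon> a) 1) (H1 \<Delta> S B1 B2) \<rparr>"

definition BChar :: "('h \<Rightarrow> ('h \<times> 'h) list) \<Rightarrow> ('h \<Rightarrow> 'h) \<Rightarrow> ('h \<Rightarrow> 'h) \<Rightarrow> ('h \<Rightarrow> 'h)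
     \<Rightarrow> ('h \<Rightarrow> 'h) \<Rightarrow> ('h::ring_1 \<Rightarrow> 'a) \<Rightarrow> 'h \<Rightarrow> 'a" where
  "BChar \<Delta> S B1 B2 B f = restrict (\<lambda>a. f (B a)) (H1 \<Delta> S B1 B2)"

end

theory Submission
  imports Defs
begin

lemma sep_lemma:
  fixes s :: "'k::field \<Rightarrow> 'w::ab_group_add \<Rightarrow> 'w"
  assumes vs: "vector_space s"
    and all: "\<And>l. Vector_Spaces.linear s (*) l \<Longrightarrow> l u = l v"
  shows "u = v"
proof (rule ccontr)
  assume ne: "u \<noteq> v"
  interpret vector_space s by fact
  define w where "w = u - v"
  have wne: "w \<noteq> 0" using ne by (simp add: w_def)
  have ind: "independent {w}" using wne by simp
  define B where "B = extend_basis {w}"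
  have iB: "independent B" using independent_extend_basis[OF ind] by (simp add: B_def)
  have sB: "span B = UNIV" using span_extend_basis[OF ind] by (simp add: B_def)
  have wB: "w \<in> B" using extend_basis_superset[OF ind] by (auto simp: B_def)
  define l where "l = (\<lambda>x. representation B x w)"
  have lin: "Vector_Spaces.linear s (*) l" using linear_representation[OF iB sB] by (simp add: l_def)
  have l1: "l w = 1" using representation_basis[OF iB wB] by (simp add: l_def)
  have add: "l (w + v) = l w + l v" using lin by (simp add: Vector_Spaces.linear_iff)
  have "w + v = u" by (simp add: w_def)
  with add l1 all[OF lin] show False by simp
qed

lemma vs_field: "vector_space ((*) :: 'k::field \<Rightarrow> 'k \<Rightarrow> 'k)"
  by unfold_locales (auto simp: algebra_simps)

lemma sumlist_additive:
  fixes l :: "'a::ab_group_add \<Rightarrow> 'b::ab_group_add"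
  assumes "\<And>x y. l (x + y) = l x + l y"
  shows "l (sum_list (map (\<lambda>(x, y). G x y) L)) = sum_list (map (\<lambda>(x, y). l (G x y)) L)"
proof -
  have z: "l 0 = 0" using assms[of 0 0] by simp
  show ?thesis by (induction L) (auto simp: z assms)
qed

locale RBS =
  fixes sH :: "'k::field_char_0 \<Rightarrow> 'h::ring_1 \<Rightarrow> 'h"
    and \<Delta> :: "'h \<Rightarrow> ('h \<times> 'h) list" and \<epsilon> :: "'h \<Rightarrow> 'k"
    and S B1 B2 :: "'h \<Rightarrow> 'h"
  assumes rbs: "rota_baxter_system sH \<Delta> \<epsilon> S B1 B2"
begin

lemma hopf: "cocomm_hopf_algebra sH \<Delta> \<epsilon> S"
  using rbs by (simp add: rota_baxter_system_def)

lemma kalg: "k_algebra sH" using hopf by (simp add: cocomm_hopf_algebra_def)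
lemma vsH: "vector_space sH" using kalg by (simp add: k_algebra_def)
lemma sc_mult_l: "sH c x * y = sH c (x * y)" using kalg by (simp add: k_algebra_def)
lemma sc_mult_r: "x * sH c y = sH c (x * y)" using kalg by (metis k_algebra_def)

lemma D_add: "teq2 sH (\<Delta> (a + b)) (\<Delta> a @ \<Delta> b)" using hopf by (simp add: cocomm_hopf_algebra_def)
lemma D_sc: "teq2 sH (\<Delta> (sH c a)) (map (\<lambda>(x, y). (sH c x, y)) (\<Delta> a))" using hopf by (simp add: cocomm_hopf_algebra_def)
lemma D_coassoc: "teq3 sH
        (concat (map (\<lambda>(x, y). map (\<lambda>(x1, x2). (x1, x2, y)) (\<Delta> x)) (\<Delta> a)))
        (concat (map (\<lambda>(x, y). map (\<lambda>(y1, y2). (x, y1, y2)) (\<Delta> y)) (\<Delta> a)))"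
  using hopf by (simp add: cocomm_hopf_algebra_def)
lemma eps_linear: "Vector_Spaces.linear sH (*) \<epsilon>" using hopf by (simp add: cocomm_hopf_algebra_def)
lemma counit_l: "sum_list (map (\<lambda>(x, y). sH (\<epsilon> x) y) (\<Delta> a)) = a" using hopf by (simp add: cocomm_hopf_algebra_def)
lemma counit_r: "sum_list (map (\<lambda>(x, y). sH (\<epsilon> y) x) (\<Delta> a)) = a" using hopf by (simp add: cocomm_hopf_algebra_def)
lemma D_mult: "teq2 sH (\<Delta> (a * b)) (tmult (\<Delta> a) (\<Delta> b))" using hopf by (simp add: cocomm_hopf_algebra_def)
lemma D_one: "teq2 sH (\<Delta> 1) [(1, 1)]" using hopf by (simp add: cocomm_hopf_algebra_def)
lemma eps_mult: "\<epsilon> (a * b) = \<epsilon> a * \<epsilon> b" using hopf by (simp add: cocomm_hopf_algebra_def)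
lemma eps_one: "\<epsilon> 1 = 1" using hopf by (simp add: cocomm_hopf_algebra_def)
lemma S_linear: "Vector_Spaces.linear sH sH S" using hopf by (simp add: cocomm_hopf_algebra_def)
lemma ant_l: "sum_list (map (\<lambda>(x, y). S x * y) (\<Delta> a)) = sH (\<epsilon> a) 1" using hopf by (simp add: cocomm_hopf_algebra_def)
lemma ant_r: "sum_list (map (\<lambda>(x, y). x * S y) (\<Delta> a)) = sH (\<epsilon> a) 1" using hopf by (simp add: cocomm_hopf_algebra_def)
lemma D_cocomm: "teq2 sH (\<Delta> a) (map (\<lambda>(x, y). (y, x)) (\<Delta> a))" using hopf by (simp add: cocomm_hopf_algebra_def)

lemma B1_coalg: "coalg_hom sH \<Delta> \<epsilon> B1" using rbs by (simp add: rota_baxter_system_def)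
lemma B2_coalg: "coalg_hom sH \<Delta> \<epsilon> B2" using rbs by (simp add: rota_baxter_system_def)
lemma B1_one: "B1 1 = 1" using rbs by (simp add: rota_baxter_system_def)
lemma B2_one: "B2 1 = 1" using rbs by (simp add: rota_baxter_system_def)
lemma RB1: "B1 a * B1 b = B1 (desc_op \<Delta> S B1 B2 a b)" using rbs by (simp add: rota_baxter_system_def)
lemma RB2: "B2 a * B2 b = B2 (desc_op \<Delta> S B1 B2 a b)" using rbs by (simp add: rota_baxter_system_def)

definition lin :: "('h \<Rightarrow> 'k) \<Rightarrow> bool" where
  "lin f \<longleftrightarrow> (\<forall>x y. f (x + y) = f x + f y) \<and> (\<forall>c x. f (sH c x) = c * f x)"
definition linH :: "('h \<Rightarrow> 'h) \<Rightarrow> bool" where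
  "linH f \<longleftrightarrow> (\<forall>x y. f (x + y) = f x + f y) \<and> (\<forall>c x. f (sH c x) = sH c (f x))"
definition bil :: "('h \<Rightarrow> 'h \<Rightarrow> 'k) \<Rightarrow> bool" where
  "bil F \<longleftrightarrow> (\<forall>y. lin (\<lambda>x. F x y)) \<and> (\<forall>x. lin (\<lambda>y. F x y))"
definition tril :: "('h \<Rightarrow> 'h \<Rightarrow> 'h \<Rightarrow> 'k) \<Rightarrow> bool" where
  "tril F \<longleftrightarrow> (\<forall>y z. lin (\<lambda>x. F x y z)) \<and> (\<forall>x z. lin (\<lambda>y. F x y z)) \<and> (\<forall>x y. lin (\<lambda>z. F x y z))"
definition quad :: "('h \<Rightarrow> 'h \<Rightarrow> 'h \<Rightarrow> 'h \<Rightarrow> 'k) \<Rightarrow> bool" where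
  "quad F \<longleftrightarrow> (\<forall>y z w. lin (\<lambda>x. F x y z w)) \<and> (\<forall>x z w. lin (\<lambda>y. F x y z w)) \<and>
     (\<forall>x y w. lin (\<lambda>z. F x y z w)) \<and> (\<forall>x y z. lin (\<lambda>w. F x y z w))"
definition sw :: "'h \<Rightarrow> ('h \<Rightarrow> 'h \<Rightarrow> 'k) \<Rightarrow> 'k" where
  "sw a F = sum_list (map (\<lambda>(x, y). F x y) (\<Delta> a))"

lemma vsK: "vector_space ((*)::'k\<Rightarrow>'k\<Rightarrow>'k)" by (rule vs_field)
lemma lin_iff: "lin f \<longleftrightarrow> Vector_Spaces.linear sH (*) f"
  using vsH vsK by (simp add: lin_def Vector_Spaces.linear_iff)
lemma linH_iff: "linH f \<longleftrightarrow> Vector_Spaces.linear sH sH f"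
  using vsH by (simp add: linH_def Vector_Spaces.linear_iff)
lemma bil_iff: "bilin_fun sH F \<longleftrightarrow> bil F"
  by (simp add: bilin_fun_def bil_def lin_iff)
lemma tril_iff: "trilin_fun sH F \<longleftrightarrow> tril F"
  by (simp add: trilin_fun_def tril_def lin_iff)

lemma linD_add: "lin f \<Longrightarrow> f (x + y) = f x + f y" by (simp add: lin_def)
lemma linD_sc: "lin f \<Longrightarrow> f (sH c x) = c * f x" by (simp add: lin_def)
lemma linHD_add: "linH f \<Longrightarrow> f (x + y) = f x + f y" by (simp add: linH_def)
lemma linHD_sc: "linH f \<Longrightarrow> f (sH c x) = sH c (f x)" by (simp add: linH_def)

lemma sH_zero: "sH 0 x = 0"
proof - interpret vector_space sH by (rule vsH) show ?thesis by simp qed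
lemma sH_one: "sH 1 x = x"
proof - interpret vector_space sH by (rule vsH) show ?thesis by simp qed

lemma lin_zero: "lin f \<Longrightarrow> f 0 = 0"
  by (metis linD_sc mult_zero_left sH_zero)
lemma linH_zero: "linH f \<Longrightarrow> f 0 = 0"
  by (metis linHD_sc sH_zero)

lemma lin_sum_list: "lin f \<Longrightarrow> f (sum_list (map (\<lambda>(x, y). G x y) L)) = sum_list (map (\<lambda>(x, y). f (G x y)) L)"
  by (induction L) (auto simp: lin_zero linD_add)
lemma linH_sum_list: "linH f \<Longrightarrow> f (sum_list (map (\<lambda>(x, y). G x y) L)) = sum_list (map (\<lambda>(x, y). f (G x y)) L)"
  by (induction L) (auto simp: linH_zero linHD_add)

lemma linI: "(\<And>x y. f (x + y) = f x + f y) \<Longrightarrow> (\<And>c x. f (sH c x) = c * f x) \<Longrightarrow> lin f"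
  by (simp add: lin_def)
lemma linHI: "(\<And>x y. f (x + y) = f x + f y) \<Longrightarrow> (\<And>c x. f (sH c x) = sH c (f x)) \<Longrightarrow> linH f"
  by (simp add: linH_def)
lemma bilI: "(\<And>y. lin (\<lambda>x. F x y)) \<Longrightarrow> (\<And>x. lin (\<lambda>y. F x y)) \<Longrightarrow> bil F"
  by (simp add: bil_def)
lemma trilI: "(\<And>y z. lin (\<lambda>x. F x y z)) \<Longrightarrow> (\<And>x z. lin (\<lambda>y. F x y z)) \<Longrightarrow> (\<And>x y. lin (\<lambda>z. F x y z)) \<Longrightarrow> tril F"
  by (simp add: tril_def)
lemma quadI: "(\<And>y z w. lin (\<lambda>x. F x y z w)) \<Longrightarrow> (\<And>x z w. lin (\<lambda>y. F x y z w)) \<Longrightarrow>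
     (\<And>x y w. lin (\<lambda>z. F x y z w)) \<Longrightarrow> (\<And>x y z. lin (\<lambda>w. F x y z w)) \<Longrightarrow> quad F"
  by (simp add: quad_def)

lemma bilD1: "bil F \<Longrightarrow> lin (\<lambda>x. F x y)" by (simp add: bil_def)
lemma bilD2: "bil F \<Longrightarrow> lin (\<lambda>y. F x y)" by (simp add: bil_def)


lemma S_lin: "linH S" using S_linear linH_iff by simp
lemma B1_lin: "linH B1" using B1_coalg linH_iff by (simp add: coalg_hom_def)
lemma B2_lin: "linH B2" using B2_coalg linH_iff by (simp add: coalg_hom_def)
lemma eps_lin: "lin \<epsilon>" using eps_linear lin_iff by simp

lemma linH_id: "linH (\<lambda>x. x)" by (simp add: linH_def)
lemma linH_lm: "linH g \<Longrightarrow> linH (\<lambda>x. c * g x)"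
  by (simp add: linH_def distrib_left sc_mult_r)
lemma linH_rm: "linH g \<Longrightarrow> linH (\<lambda>x. g x * c)"
  by (simp add: linH_def distrib_right sc_mult_l)
lemma linH_S: "linH g \<Longrightarrow> linH (\<lambda>x. S (g x))"
  using S_lin by (simp add: linH_def)
lemma linH_B1: "linH g \<Longrightarrow> linH (\<lambda>x. B1 (g x))"
  using B1_lin by (simp add: linH_def)
lemma linH_B2: "linH g \<Longrightarrow> linH (\<lambda>x. B2 (g x))"
  using B2_lin by (simp add: linH_def)
lemma lin_comp: "lin l \<Longrightarrow> linH g \<Longrightarrow> lin (\<lambda>x. l (g x))"
  by (simp add: lin_def linH_def)
lemma lin_eps: "linH g \<Longrightarrow> lin (\<lambda>x. \<epsilon> (g x))"
  using eps_lin by (simp add: lin_def linH_def)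
lemma lin_cm_l: "lin f \<Longrightarrow> lin (\<lambda>x. c * f x)"
  by (simp add: lin_def algebra_simps)
lemma lin_cm_r: "lin f \<Longrightarrow> lin (\<lambda>x. f x * c)"
  by (simp add: lin_def algebra_simps)
lemma lin_phi2: "bil \<phi> \<Longrightarrow> linH g \<Longrightarrow> lin (\<lambda>x. \<phi> c (g x))"
  by (rule lin_comp[of "\<phi> c"]) (simp_all add: bil_def)
lemma lin_phi1: "bil \<phi> \<Longrightarrow> linH g \<Longrightarrow> lin (\<lambda>x. \<phi> (g x) c)"
  by (rule lin_comp[of "\<lambda>x. \<phi> x c"]) (simp_all add: bil_def)
lemma lin_add_fun: "lin f \<Longrightarrow> lin g \<Longrightarrow> lin (\<lambda>x. f x + g x)"
  by (simp add: lin_def algebra_simps)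

lemma sum_pairs_map_fst: "sum_list (map (\<lambda>(x, y). F x y) (map (\<lambda>(x, y). (g x, y)) L)) =
   sum_list (map (\<lambda>(x, y). F (g x) y) L)"
  by (induction L) auto
lemma sum_pairs_swap: "sum_list (map (\<lambda>(x, y). F x y) (map (\<lambda>(x, y). (y, x)) L)) =
   sum_list (map (\<lambda>(x, y). F y x) L)"
  by (induction L) auto
lemma sum_pairs_map2: "sum_list (map (\<lambda>(x, y). F x y) (map (\<lambda>(x, y). (g x, h y)) L)) =
   sum_list (map (\<lambda>(x, y). F (g x) (h y)) L)"
  by (induction L) auto
lemma sum_pairs_inner: "sum_list (map (\<lambda>(x, y). F x y) (map (\<lambda>(x', y'). (x * x', y * y')) U)) =
          sum_list (map (\<lambda>(u, v). F (x * u) (y * v)) U)"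
  by (induction U) auto
lemma sum_pairs_tmult: "sum_list (map (\<lambda>(x, y). F x y) (tmult T U)) =
   sum_list (map (\<lambda>(x, y). sum_list (map (\<lambda>(u, v). F (x * u) (y * v)) U)) T)"
  unfolding tmult_def
proof (induction T)
  case (Cons p T)
  obtain x y where p: "p = (x, y)" by (cases p)
  show ?case using Cons sum_pairs_inner[of F x y U] by (simp add: p)
qed simp
lemma sum_pairs_c1_inner: "sum_list (map (\<lambda>(x, y, z). G x y z) (map (\<lambda>(x1, x2). (x1, x2, y)) M)) =
     sum_list (map (\<lambda>(x1, x2). G x1 x2 y) M)" by (induction M) auto
lemma sum_pairs_c2_inner: "sum_list (map (\<lambda>(x, y, z). G x y z) (map (\<lambda>(y1, y2). (x, y1, y2)) M)) =
     sum_list (map (\<lambda>(y1, y2). G x y1 y2) M)" by (induction M) auto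
lemma sum_pairs_coassoc1: "sum_list (map (\<lambda>(x, y, z). G x y z) (concat (map (\<lambda>(x, y). map (\<lambda>(x1, x2). (x1, x2, y)) (D x)) L))) =
   sum_list (map (\<lambda>(x, y). sum_list (map (\<lambda>(x1, x2). G x1 x2 y) (D x))) L)"
proof (induction L)
  case (Cons p L)
  obtain x y where p: "p = (x, y)" by (cases p)
  show ?case using Cons sum_pairs_c1_inner[of G y "D x"] by (simp add: p)
qed simp
lemma sum_pairs_coassoc2: "sum_list (map (\<lambda>(x, y, z). G x y z) (concat (map (\<lambda>(x, y). map (\<lambda>(y1, y2). (x, y1, y2)) (D y)) L))) =
   sum_list (map (\<lambda>(x, y). sum_list (map (\<lambda>(y1, y2). G x y1 y2) (D y))) L)"
proof (induction L)
  case (Cons p L)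
  obtain x y where p: "p = (x, y)" by (cases p)
  show ?case using Cons sum_pairs_c2_inner[of G x "D y"] by (simp add: p)
qed simp

lemma sl_cmult_l: "sum_list (map (\<lambda>(x, y). c * F x y) L) = (c::'k) * sum_list (map (\<lambda>(x, y). F x y) L)"
  by (induction L) (auto simp: algebra_simps)
lemma sl_cmult_r: "sum_list (map (\<lambda>(x, y). F x y * c) L) = sum_list (map (\<lambda>(x, y). F x y) L) * (c::'k)"
  by (induction L) (auto simp: algebra_simps)
lemma sl_add: "sum_list (map (\<lambda>(x, y). F x y + G x y) L) =
    sum_list (map (\<lambda>(x, y). F x y) L) + sum_list (map (\<lambda>(x, y). (G x y :: 'w::comm_monoid_add)) L)"
  by (induction L) (auto simp: algebra_simps)
lemma sl_zero: "sum_list (map (\<lambda>(x, y). 0::'w::comm_monoid_add) L) = 0"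
  by (induction L) auto
lemma sl_swap: "sum_list (map (\<lambda>(x, y). sum_list (map (\<lambda>(u, v). F x y u v) M)) L) =
   sum_list (map (\<lambda>(u, v). sum_list (map (\<lambda>(x, y). (F x y u v::'w::comm_monoid_add)) L)) M)"
proof (induction L)
  case Nil then show ?case by (simp add: sl_zero)
next
  case (Cons p L)
  obtain x y where p: "p = (x, y)" by (cases p)
  show ?case using Cons by (simp add: p sl_add)
qed

lemma sw_teq: "teq2 sH T U \<Longrightarrow> bil F \<Longrightarrow>
   sum_list (map (\<lambda>(x, y). F x y) T) = sum_list (map (\<lambda>(x, y). F x y) U)"
  by (simp add: teq2_def bil_iff[symmetric])

lemma sw_add_arg: "bil F \<Longrightarrow> sw (a + b) F = sw a F + sw b F"
  using sw_teq[OF D_add] by (simp add: sw_def)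
lemma sw_sc_arg: "bil F \<Longrightarrow> sw (sH c a) F = c * sw a F"
proof -
  assume b: "bil F"
  have "sw (sH c a) F = sum_list (map (\<lambda>(x, y). F (sH c x) y) (\<Delta> a))"
    using sw_teq[OF D_sc b] unfolding sw_def sum_pairs_map_fst by simp
  also have "\<dots> = sum_list (map (\<lambda>(x, y). c * F x y) (\<Delta> a))"
    using linD_sc[OF bilD1[OF b]] by (metis (no_types, lifting))
  also have "\<dots> = c * sw a F" unfolding sw_def by (rule sl_cmult_l)
  finally show ?thesis .
qed
lemma lin_sw: "bil F \<Longrightarrow> lin (\<lambda>a. sw a F)"
  by (simp add: linI sw_add_arg sw_sc_arg)
lemma lin_sw_arg: "bil F \<Longrightarrow> linH g \<Longrightarrow> lin (\<lambda>x. sw (g x) F)"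
  by (rule lin_comp[of "\<lambda>a. sw a F"]) (simp_all add: lin_sw)
lemma lin_sw_fun: "(\<And>u v. lin (\<lambda>x. F u v x)) \<Longrightarrow> lin (\<lambda>x. sw a (\<lambda>u v. F u v x))"
proof (rule linI)
  fix x y c
  assume l: "\<And>u v. lin (\<lambda>x. F u v x)"
  show "sw a (\<lambda>u v. F u v (x + y)) = sw a (\<lambda>u v. F u v x) + sw a (\<lambda>u v. F u v y)"
    unfolding sw_def using linD_add[OF l] by (simp add: sl_add)
  show "sw a (\<lambda>u v. F u v (sH c x)) = c * sw a (\<lambda>u v. F u v x)"
    unfolding sw_def using linD_sc[OF l] by (simp add: sl_cmult_l)
qed

lemma sw_mult: "bil F \<Longrightarrow> sw (a * b) F = sw a (\<lambda>x y. sw b (\<lambda>u v. F (x * u) (y * v)))"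
  using sw_teq[OF D_mult] unfolding sw_def sum_pairs_tmult by simp
lemma sw_one: "bil F \<Longrightarrow> sw 1 F = F 1 1"
  using sw_teq[OF D_one] by (simp add: sw_def)
lemma sw_cocomm: "bil F \<Longrightarrow> sw a F = sw a (\<lambda>x y. F y x)"
  using sw_teq[OF D_cocomm] unfolding sw_def sum_pairs_swap by simp
lemma sw_coassoc: "tril G \<Longrightarrow>
   sw a (\<lambda>x y. sw x (\<lambda>x1 x2. G x1 x2 y)) = sw a (\<lambda>x y. sw y (\<lambda>y1 y2. G x y1 y2))"
  using D_coassoc[of a] unfolding teq3_def tril_iff sw_def sum_pairs_coassoc1 sum_pairs_coassoc2
  by blast

lemma sw_push: "lin l \<Longrightarrow> l (sum_list (map (\<lambda>(x, y). G x y) (\<Delta> a))) = sw a (\<lambda>x y. l (G x y))"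
  by (simp add: sw_def lin_sum_list)
lemma sw_counit_l: "lin g \<Longrightarrow> sw a (\<lambda>x y. \<epsilon> x * g y) = g a"
proof -
  assume l: "lin g"
  have "g a = g (sum_list (map (\<lambda>(x, y). sH (\<epsilon> x) y) (\<Delta> a)))" by (simp add: counit_l)
  also have "\<dots> = sw a (\<lambda>x y. \<epsilon> x * g y)" by (simp add: sw_push l linD_sc)
  finally show ?thesis by simp
qed
lemma sw_counit_r: "lin g \<Longrightarrow> sw a (\<lambda>x y. \<epsilon> y * g x) = g a"
proof -
  assume l: "lin g"
  have "g a = g (sum_list (map (\<lambda>(x, y). sH (\<epsilon> y) x) (\<Delta> a)))" by (simp add: counit_r)
  also have "\<dots> = sw a (\<lambda>x y. \<epsilon> y * g x)" by (simp add: sw_push l linD_sc)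
  finally show ?thesis by simp
qed
lemma sw_ant_l: "lin g \<Longrightarrow> sw a (\<lambda>x y. g (S x * y)) = \<epsilon> a * g 1"
proof -
  assume l: "lin g"
  have "sw a (\<lambda>x y. g (S x * y)) = g (sum_list (map (\<lambda>(x, y). S x * y) (\<Delta> a)))" by (simp add: sw_push l)
  also have "\<dots> = \<epsilon> a * g 1" by (simp add: ant_l l linD_sc)
  finally show ?thesis .
qed
lemma sw_ant_r: "lin g \<Longrightarrow> sw a (\<lambda>x y. g (x * S y)) = \<epsilon> a * g 1"
proof -
  assume l: "lin g"
  have "sw a (\<lambda>x y. g (x * S y)) = g (sum_list (map (\<lambda>(x, y). x * S y) (\<Delta> a)))" by (simp add: sw_push l)
  also have "\<dots> = \<epsilon> a * g 1" by (simp add: ant_r l linD_sc)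
  finally show ?thesis .
qed
lemma sw_coalg: "coalg_hom sH \<Delta> \<epsilon> B \<Longrightarrow> bil F \<Longrightarrow> sw (B a) F = sw a (\<lambda>x y. F (B x) (B y))"
proof -
  assume c: "coalg_hom sH \<Delta> \<epsilon> B" and b: "bil F"
  have t: "teq2 sH (\<Delta> (B a)) (map (\<lambda>(x, y). (B x, B y)) (\<Delta> a))" using c by (simp add: coalg_hom_def)
  from sw_teq[OF t b] show ?thesis unfolding sw_def sum_pairs_map2 by simp
qed
lemma sw_swap: "sw a (\<lambda>x y. sw b (\<lambda>u v. F x y u v)) = sw b (\<lambda>u v. sw a (\<lambda>x y. F x y u v))"
  unfolding sw_def by (rule sl_swap)
lemma sw_cmult_l: "sw a (\<lambda>x y. c * F x y) = c * sw a F"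
  unfolding sw_def by (rule sl_cmult_l)
lemma sw_cmult_r: "sw a (\<lambda>x y. F x y * c) = sw a F * c"
  unfolding sw_def by (rule sl_cmult_r)



lemmas lin_rules = lin_sw_fun lin_sw_arg lin_cm_l lin_cm_r lin_eps lin_add_fun
  linH_id linH_lm linH_rm linH_S linH_B1 linH_B2

lemma quadD: assumes "quad \<Phi>"
  shows "lin (\<lambda>x. \<Phi> x y z w)" "lin (\<lambda>y. \<Phi> x y z w)" "lin (\<lambda>z. \<Phi> x y z w)" "lin (\<lambda>w. \<Phi> x y z w)"
  using assms by (simp_all add: quad_def)

lemma F1_F2: assumes "quad \<Phi>"
  shows "sw a (\<lambda>x y. sw x (\<lambda>x1 x2. sw y (\<lambda>y1 y2. \<Phi> x1 x2 y1 y2))) =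
         sw a (\<lambda>x y. sw y (\<lambda>y1 y2. sw y1 (\<lambda>m1 m2. \<Phi> x m1 m2 y2)))"
proof -
  note q = quadD[OF assms]
  have t1: "tril (\<lambda>x1 x2 y. sw y (\<lambda>y1 y2. \<Phi> x1 x2 y1 y2))" by (intro trilI bilI q lin_rules)
  have e1: "sw a (\<lambda>x y. sw x (\<lambda>x1 x2. sw y (\<lambda>y1 y2. \<Phi> x1 x2 y1 y2))) =
        sw a (\<lambda>x y. sw y (\<lambda>y1 y2. sw y2 (\<lambda>z1 z2. \<Phi> x y1 z1 z2)))"
    using sw_coassoc[OF t1, of a] by simp
  have e2: "sw y (\<lambda>y1 y2. sw y2 (\<lambda>z1 z2. \<Phi> x y1 z1 z2)) = sw y (\<lambda>y1 y2. sw y1 (\<lambda>m1 m2. \<Phi> x m1 m2 y2))" for x y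
  proof -
    have t2: "tril (\<lambda>m1 m2 v. \<Phi> x m1 m2 v)" by (intro trilI q)
    show ?thesis using sw_coassoc[OF t2, of y] by simp
  qed
  show ?thesis using e1 e2 by simp
qed

lemma F4_F2: assumes "quad \<Phi>"
  shows "sw a (\<lambda>x y. sw x (\<lambda>x1 x2. sw x2 (\<lambda>m1 m2. \<Phi> x1 m1 m2 y))) =
         sw a (\<lambda>x y. sw y (\<lambda>y1 y2. sw y1 (\<lambda>m1 m2. \<Phi> x m1 m2 y2)))"
proof -
  note q = quadD[OF assms]
  have t1: "tril (\<lambda>x1 x2 y. sw x2 (\<lambda>m1 m2. \<Phi> x1 m1 m2 y))" by (intro trilI bilI q lin_rules)
  show ?thesis using sw_coassoc[OF t1, of a] by simp
qed

lemma F1_F4: assumes "quad \<Phi>"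
  shows "sw a (\<lambda>x y. sw x (\<lambda>x1 x2. sw y (\<lambda>y1 y2. \<Phi> x1 x2 y1 y2))) =
         sw a (\<lambda>x y. sw x (\<lambda>x1 x2. sw x2 (\<lambda>m1 m2. \<Phi> x1 m1 m2 y)))"
  using F1_F2[OF assms] F4_F2[OF assms] by simp

lemma MS: assumes "quad \<Phi>"
  shows "sw a (\<lambda>x y. sw x (\<lambda>x1 x2. sw y (\<lambda>y1 y2. \<Phi> x1 x2 y1 y2))) =
         sw a (\<lambda>x y. sw x (\<lambda>x1 x2. sw y (\<lambda>y1 y2. \<Phi> x1 y1 x2 y2)))"
proof -
  note q = quadD[OF assms]
  have q2: "quad (\<lambda>x1 x2 y1 y2. \<Phi> x1 y1 x2 y2)" by (intro quadI q)
  have e: "sw y1 (\<lambda>m1 m2. \<Phi> x m1 m2 y2) = sw y1 (\<lambda>m1 m2. \<Phi> x m2 m1 y2)" for x y1 y2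
  proof -
    have "bil (\<lambda>m1 m2. \<Phi> x m1 m2 y2)" by (intro bilI q)
    from sw_cocomm[OF this] show ?thesis by simp
  qed
  show ?thesis using F1_F2[OF assms] F1_F2[OF q2] e by simp
qed

lemma DS_flip: assumes b: "bil \<phi>" shows "sw (S a) \<phi> = sw a (\<lambda>x y. \<phi> (S y) (S x))"
proof -
  note p1 = lin_phi1[OF b] and p2 = lin_phi2[OF b]
  define K where "K = (\<lambda>x1 x2 y. sw (S x1) (\<lambda>p1 p2. sw x2 (\<lambda>q1 q2. sw y (\<lambda>r1 r2. \<phi> (p1*q1*S r2) (p2*q2*S r1)))))"
  have tK: "tril K" unfolding K_def by (intro trilI bilI lin_rules p2 p1)
  have A: "sw a (\<lambda>x y. sw x (\<lambda>x1 x2. K x1 x2 y)) = sw a (\<lambda>x y. sw y (\<lambda>y1 y2. K x y1 y2))"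
    by (rule sw_coassoc[OF tK])
  have B1': "sw x (\<lambda>x1 x2. K x1 x2 y) = \<epsilon> x * sw y (\<lambda>r1 r2. \<phi> (S r2) (S r1))" for x y
  proof -
    define \<Theta> where "\<Theta> = (\<lambda>u v. sw y (\<lambda>r1 r2. \<phi> (u * S r2) (v * S r1)))"
    have bT: "bil \<Theta>" unfolding \<Theta>_def by (intro bilI lin_rules p2 p1)
    have k: "K x1 x2 y = sw (S x1 * x2) \<Theta>" for x1 x2
      unfolding K_def using sw_mult[OF bT, of "S x1" x2] by (simp add: \<Theta>_def)
    have "sw x (\<lambda>x1 x2. K x1 x2 y) = sw x (\<lambda>x1 x2. (\<lambda>h. sw h \<Theta>) (S x1 * x2))" by (simp add: k)
    also have "\<dots> = \<epsilon> x * sw 1 \<Theta>" by (rule sw_ant_l[OF lin_sw[OF bT]])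
    also have "\<dots> = \<epsilon> x * sw y (\<lambda>r1 r2. \<phi> (S r2) (S r1))" by (subst sw_one[OF bT]) (simp add: \<Theta>_def)
    finally show ?thesis .
  qed
  have B: "sw a (\<lambda>x y. sw x (\<lambda>x1 x2. K x1 x2 y)) = sw a (\<lambda>x y. \<phi> (S y) (S x))"
  proof -
    have l: "lin (\<lambda>y. sw y (\<lambda>r1 r2. \<phi> (S r2) (S r1)))" by (intro lin_rules bilI p2 p1)
    have "sw a (\<lambda>x y. sw x (\<lambda>x1 x2. K x1 x2 y)) = sw a (\<lambda>x y. \<epsilon> x * sw y (\<lambda>r1 r2. \<phi> (S r2) (S r1)))"
      by (simp add: B1')
    also have "\<dots> = sw a (\<lambda>r1 r2. \<phi> (S r2) (S r1))" by (rule sw_counit_l[OF l])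
    finally show ?thesis .
  qed
  have C1: "sw y (\<lambda>y1 y2. K x y1 y2) = \<epsilon> y * sw (S x) \<phi>" for x y
  proof -
    have inner: "sw y (\<lambda>y1 y2. sw y1 (\<lambda>q1 q2. sw y2 (\<lambda>r1 r2. \<phi> (p1*q1*S r2) (p2*q2*S r1)))) = \<epsilon> y * \<phi> p1 p2" for p1 p2
    proof -
      have qd: "quad (\<lambda>q1 q2 r1 r2. \<phi> (p1*q1*S r2) (p2*q2*S r1))" by (intro quadI lin_rules p2 p1)
      have "sw y (\<lambda>y1 y2. sw y1 (\<lambda>q1 q2. sw y2 (\<lambda>r1 r2. \<phi> (p1*q1*S r2) (p2*q2*S r1)))) =
            sw y (\<lambda>u r2. sw u (\<lambda>q1 w. sw w (\<lambda>q2 r1. \<phi> (p1*q1*S r2) (p2*q2*S r1))))"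
        using F1_F4[OF qd, of y] by simp
      also have "\<dots> = sw y (\<lambda>u r2. sw u (\<lambda>q1 w. \<epsilon> w * \<phi> (p1*q1*S r2) p2))"
      proof -
        have "sw w (\<lambda>q2 r1. \<phi> (p1*q1*S r2) (p2*q2*S r1)) = \<epsilon> w * \<phi> (p1*q1*S r2) p2" for w q1 r2
        proof -
          have l: "lin (\<lambda>h. \<phi> (p1*q1*S r2) (p2*h))" by (intro lin_rules p2 p1)
          show ?thesis using sw_ant_r[OF l, of w] by (simp add: mult.assoc)
        qed
        then show ?thesis by simp
      qed
      also have "\<dots> = sw y (\<lambda>u r2. \<phi> (p1*u*S r2) p2)"
      proof -
        have "sw u (\<lambda>q1 w. \<epsilon> w * \<phi> (p1*q1*S r2) p2) = \<phi> (p1*u*S r2) p2" for u r2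
        proof -
          have l: "lin (\<lambda>q1. \<phi> (p1*q1*S r2) p2)" by (intro lin_rules p2 p1)
          show ?thesis using sw_counit_r[OF l, of u] by simp
        qed
        then show ?thesis by simp
      qed
      also have "\<dots> = \<epsilon> y * \<phi> p1 p2"
      proof -
        have l: "lin (\<lambda>h. \<phi> (p1*h) p2)" by (intro lin_rules p2 p1)
        show ?thesis using sw_ant_r[OF l, of y] by (simp add: mult.assoc)
      qed
      finally show ?thesis .
    qed
    have "sw y (\<lambda>y1 y2. K x y1 y2) = sw (S x) (\<lambda>p1 p2. sw y (\<lambda>y1 y2. sw y1 (\<lambda>q1 q2. sw y2 (\<lambda>r1 r2. \<phi> (p1*q1*S r2) (p2*q2*S r1)))))"
      unfolding K_def by (rule sw_swap)
    also have "\<dots> = sw (S x) (\<lambda>p1 p2. \<epsilon> y * \<phi> p1 p2)" by (simp add: inner)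
    also have "\<dots> = \<epsilon> y * sw (S x) \<phi>" by (rule sw_cmult_l)
    finally show ?thesis .
  qed
  have C: "sw a (\<lambda>x y. sw y (\<lambda>y1 y2. K x y1 y2)) = sw (S a) \<phi>"
  proof -
    have l: "lin (\<lambda>x. sw (S x) \<phi>)" using b by (intro lin_rules)
    show ?thesis by (simp add: C1 sw_counit_r[OF l])
  qed
  show ?thesis using A B C by simp
qed

lemma DS: assumes b: "bil \<phi>" shows "sw (S a) \<phi> = sw a (\<lambda>x y. \<phi> (S x) (S y))"
proof -
  note p1 = lin_phi1[OF b] and p2 = lin_phi2[OF b]
  have "bil (\<lambda>x y. \<phi> (S y) (S x))" by (intro bilI lin_rules p2 p1)
  from sw_cocomm[OF this, of a] DS_flip[OF b, of a] show ?thesis by simp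
qed


lemma sepH: "(\<And>l. lin l \<Longrightarrow> l u = l v) \<Longrightarrow> u = v"
  by (rule sep_lemma[OF vsH]) (simp add: lin_iff)

lemma S_antimult: "S (a * b) = S b * S a"
proof (rule sepH)
  fix l assume ll: "lin l"
  note c = lin_comp[OF ll]
  define Ga where "Ga = (\<lambda>x1 x2 y. sw b (\<lambda>u v. sw u (\<lambda>u1 u2. l (S u1 * S x1 * (x2 * u2) * S (y * v)))))"
  have tG: "tril Ga" unfolding Ga_def by (intro trilI lin_rules bilI c)
  have Z: "sw a (\<lambda>x y. sw x (\<lambda>x1 x2. Ga x1 x2 y)) = sw a (\<lambda>x y. sw y (\<lambda>y1 y2. Ga x y1 y2))"
    by (rule sw_coassoc[OF tG])
  have i1: "sw x (\<lambda>x1 x2. Ga x1 x2 y) = \<epsilon> x * sw b (\<lambda>u v. sw u (\<lambda>u1 u2. l (S u1 * u2 * S (y * v))))" for x y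
  proof -
    have "sw x (\<lambda>x1 x2. Ga x1 x2 y) = sw b (\<lambda>u v. sw x (\<lambda>x1 x2. sw u (\<lambda>u1 u2. l (S u1 * S x1 * (x2 * u2) * S (y * v)))))"
      unfolding Ga_def by (rule sw_swap)
    also have "\<dots> = sw b (\<lambda>u v. sw u (\<lambda>u1 u2. sw x (\<lambda>x1 x2. l (S u1 * S x1 * (x2 * u2) * S (y * v)))))"
      by (simp only: sw_swap[of x])
    also have "\<dots> = sw b (\<lambda>u v. sw u (\<lambda>u1 u2. \<epsilon> x * l (S u1 * u2 * S (y * v))))"
    proof -
      have "sw x (\<lambda>x1 x2. l (S u1 * S x1 * (x2 * u2) * S (y * v))) = \<epsilon> x * l (S u1 * u2 * S (y * v))" for u1 u2 v
      proof -
        have lg: "lin (\<lambda>h. l (S u1 * h * u2 * S (y * v)))" by (intro lin_rules c)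
        show ?thesis using sw_ant_l[OF lg, of x] by (simp add: mult.assoc)
      qed
      then show ?thesis by simp
    qed
    also have "\<dots> = \<epsilon> x * sw b (\<lambda>u v. sw u (\<lambda>u1 u2. l (S u1 * u2 * S (y * v))))"
      by (simp add: sw_cmult_l)
    finally show ?thesis .
  qed
  have I: "sw a (\<lambda>x y. sw x (\<lambda>x1 x2. Ga x1 x2 y)) = l (S (a * b))"
  proof -
    have lW: "lin (\<lambda>y. sw b (\<lambda>u v. sw u (\<lambda>u1 u2. l (S u1 * u2 * S (y * v)))))" by (intro lin_rules c)
    have "sw a (\<lambda>x y. sw x (\<lambda>x1 x2. Ga x1 x2 y)) = sw b (\<lambda>u v. sw u (\<lambda>u1 u2. l (S u1 * u2 * S (a * v))))"
      by (simp add: i1 sw_counit_l[OF lW])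
    also have "\<dots> = sw b (\<lambda>u v. \<epsilon> u * l (S (a * v)))"
    proof -
      have "sw u (\<lambda>u1 u2. l (S u1 * u2 * S (a * v))) = \<epsilon> u * l (S (a * v))" for u v
      proof -
        have lg: "lin (\<lambda>h. l (h * S (a * v)))" by (intro lin_rules c)
        show ?thesis using sw_ant_l[OF lg, of u] by simp
      qed
      then show ?thesis by simp
    qed
    also have "\<dots> = l (S (a * b))"
    proof -
      have lg: "lin (\<lambda>v. l (S (a * v)))" by (intro lin_rules c)
      show ?thesis by (rule sw_counit_l[OF lg])
    qed
    finally show ?thesis .
  qed
  have i2: "sw y (\<lambda>y1 y2. Ga x y1 y2) = \<epsilon> y * l (S b * S x)" for x y
  proof -
    have e1: "sw b (\<lambda>u v. sw u (\<lambda>u1 u2. l (S u1 * S x * (y1 * u2) * S (y2 * v)))) =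
          sw b (\<lambda>u v. sw v (\<lambda>v1 v2. l (S u * S x * (y1 * v1) * S (y2 * v2))))" for y1 y2
    proof -
      have t: "tril (\<lambda>u1 u2 v. l (S u1 * S x * (y1 * u2) * S (y2 * v)))" by (intro trilI lin_rules c)
      show ?thesis using sw_coassoc[OF t, of b] by simp
    qed
    have "sw y (\<lambda>y1 y2. Ga x y1 y2) = sw y (\<lambda>y1 y2. sw b (\<lambda>u v. sw v (\<lambda>v1 v2. l (S u * S x * (y1 * v1) * S (y2 * v2)))))"
      unfolding Ga_def by (simp add: e1)
    also have "\<dots> = sw b (\<lambda>u v. sw y (\<lambda>y1 y2. sw v (\<lambda>v1 v2. l (S u * S x * (y1 * v1) * S (y2 * v2)))))"
      by (rule sw_swap)
    also have "\<dots> = sw b (\<lambda>u v. sw (y * v) (\<lambda>p q. l (S u * S x * p * S q)))"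
    proof -
      have "sw (y * v) (\<lambda>p q. l (S u * S x * p * S q)) = sw y (\<lambda>y1 y2. sw v (\<lambda>v1 v2. l (S u * S x * (y1 * v1) * S (y2 * v2))))" for u v
      proof -
        have bb: "bil (\<lambda>p q. l (S u * S x * p * S q))" by (intro bilI lin_rules c)
        show ?thesis using sw_mult[OF bb, of y v] by simp
      qed
      then show ?thesis by simp
    qed
    also have "\<dots> = sw b (\<lambda>u v. \<epsilon> (y * v) * l (S u * S x))"
    proof -
      have "sw (y * v) (\<lambda>p q. l (S u * S x * p * S q)) = \<epsilon> (y * v) * l (S u * S x)" for u v
      proof -
        have lg: "lin (\<lambda>h. l (S u * S x * h))" by (intro lin_rules c)
        show ?thesis using sw_ant_r[OF lg, of "y * v"] by (simp add: mult.assoc)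
      qed
      then show ?thesis by simp
    qed
    also have "\<dots> = \<epsilon> y * sw b (\<lambda>u v. \<epsilon> v * l (S u * S x))"
      by (simp add: eps_mult sw_cmult_l[symmetric] mult.assoc)
    also have "\<dots> = \<epsilon> y * l (S b * S x)"
    proof -
      have lg: "lin (\<lambda>u. l (S u * S x))" by (intro lin_rules c)
      show ?thesis by (simp add: sw_counit_r[OF lg])
    qed
    finally show ?thesis .
  qed
  have II: "sw a (\<lambda>x y. sw y (\<lambda>y1 y2. Ga x y1 y2)) = l (S b * S a)"
  proof -
    have lg: "lin (\<lambda>x. l (S b * S x))" by (intro lin_rules c)
    show ?thesis by (simp add: i2 sw_counit_r[OF lg])
  qed
  show "l (S (a * b)) = l (S b * S a)" using I II Z by simp
qed


abbreviation dop where "dop \<equiv> desc_op \<Delta> S B1 B2"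
abbreviation sig where "sig \<equiv> cocycle \<Delta> S B1 B2"

lemma sw_sum: "bil \<phi> \<Longrightarrow> sw (sum_list (map (\<lambda>(x, y). G x y) (\<Delta> a))) \<phi> = sw a (\<lambda>x y. sw (G x y) \<phi>)"
  by (rule sw_push[OF lin_sw])

lemma D_desc: assumes b: "bil \<phi>"
  shows "sw (dop a c) \<phi> = sw a (\<lambda>x y. sw c (\<lambda>u v. \<phi> (dop x u) (dop y v)))"
proof -
  note p1 = lin_phi1[OF b] and p2 = lin_phi2[OF b]
  define \<Phi> where "\<Phi> = (\<lambda>x1 x2 y1 y2. sw c (\<lambda>q1 q2. \<phi> (B1 x1*q1*S(B2 y1)) (B1 x2*q2*S(B2 y2))))"
  have qd: "quad \<Phi>" unfolding \<Phi>_def by (intro quadI lin_rules bilI p2 p1)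
  have pw: "sw (B1 x * c * S (B2 y)) \<phi> = sw x (\<lambda>x1 x2. sw y (\<lambda>y1 y2. \<Phi> x1 x2 y1 y2))" for x y
  proof -
    have bF: "bil (\<lambda>p1 p2. sw (S (B2 y)) (\<lambda>r1 r2. \<phi> (p1*r1) (p2*r2)))" by (intro bilI lin_rules p2 p1)
    have bG: "bil (\<lambda>s1 s2. sw c (\<lambda>q1 q2. sw (S (B2 y)) (\<lambda>r1 r2. \<phi> (s1*q1*r1) (s2*q2*r2))))"
      by (intro bilI lin_rules p2 p1)
    have "sw (B1 x * c * S (B2 y)) \<phi> = sw (B1 x * c) (\<lambda>p1 p2. sw (S (B2 y)) (\<lambda>r1 r2. \<phi> (p1*r1) (p2*r2)))"
      by (rule sw_mult[OF b])
    also have "\<dots> = sw (B1 x) (\<lambda>s1 s2. sw c (\<lambda>q1 q2. sw (S (B2 y)) (\<lambda>r1 r2. \<phi> (s1*q1*r1) (s2*q2*r2))))"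
      using sw_mult[OF bF] by simp
    also have "\<dots> = sw x (\<lambda>x1 x2. sw c (\<lambda>q1 q2. sw (S (B2 y)) (\<lambda>r1 r2. \<phi> (B1 x1*q1*r1) (B1 x2*q2*r2))))"
      using sw_coalg[OF B1_coalg bG] by simp
    also have "\<dots> = sw x (\<lambda>x1 x2. sw c (\<lambda>q1 q2. sw y (\<lambda>y1 y2. \<phi> (B1 x1*q1*S(B2 y1)) (B1 x2*q2*S(B2 y2)))))"
    proof -
      have "sw (S (B2 y)) (\<lambda>r1 r2. \<phi> (B1 x1*q1*r1) (B1 x2*q2*r2)) = sw y (\<lambda>y1 y2. \<phi> (B1 x1*q1*S(B2 y1)) (B1 x2*q2*S(B2 y2)))"
        for x1 x2 q1 q2
      proof -
        have bb: "bil (\<lambda>r1 r2. \<phi> (B1 x1*q1*r1) (B1 x2*q2*r2))" by (intro bilI lin_rules p2 p1)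
        have bb2: "bil (\<lambda>z1 z2. \<phi> (B1 x1*q1*S z1) (B1 x2*q2*S z2))" by (intro bilI lin_rules p2 p1)
        show ?thesis using DS[OF bb, of "B2 y"] sw_coalg[OF B2_coalg bb2, of y] by simp
      qed
      then show ?thesis by simp
    qed
    also have "\<dots> = sw x (\<lambda>x1 x2. sw y (\<lambda>y1 y2. \<Phi> x1 x2 y1 y2))"
      unfolding \<Phi>_def by (simp only: sw_swap[of c])
    finally show ?thesis .
  qed
  have "sw (dop a c) \<phi> = sw a (\<lambda>x y. sw x (\<lambda>x1 x2. sw y (\<lambda>y1 y2. \<Phi> x1 x2 y1 y2)))"
    unfolding desc_op_def by (simp add: sw_sum[OF b] pw)
  also have "\<dots> = sw a (\<lambda>x y. sw x (\<lambda>x1 x2. sw y (\<lambda>y1 y2. \<Phi> x1 y1 x2 y2)))"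
    by (rule MS[OF qd])
  also have "\<dots> = sw a (\<lambda>x y. sw c (\<lambda>u v. \<phi> (dop x u) (dop y v)))"
  proof -
    have "\<phi> (dop x u) (dop y v) = sw x (\<lambda>x1 x2. sw y (\<lambda>y1 y2. \<phi> (B1 x1*u*S(B2 x2)) (B1 y1*v*S(B2 y2))))" for x y u v
    proof -
      have l1: "lin (\<lambda>h. \<phi> h (dop y v))" by (intro lin_rules p2 p1)
      have l2: "lin (\<lambda>h. \<phi> (B1 x1*u*S(B2 x2)) h)" for x1 x2 by (intro lin_rules p2 p1)
      have e1: "\<phi> (dop x u) (dop y v) = sw x (\<lambda>x1 x2. \<phi> (B1 x1*u*S(B2 x2)) (dop y v))"
        using sw_push[OF l1, of "\<lambda>x1 x2. B1 x1*u*S(B2 x2)" x] by (simp add: desc_op_def)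
      have e2: "\<phi> (B1 x1*u*S(B2 x2)) (dop y v) = sw y (\<lambda>y1 y2. \<phi> (B1 x1*u*S(B2 x2)) (B1 y1*v*S(B2 y2)))" for x1 x2
        using sw_push[OF l2, of x1 x2 "\<lambda>y1 y2. B1 y1*v*S(B2 y2)" y] by (simp add: desc_op_def)
      show ?thesis using e1 e2 by simp
    qed
    then have "sw c (\<lambda>u v. \<phi> (dop x u) (dop y v)) = sw x (\<lambda>x1 x2. sw y (\<lambda>y1 y2. \<Phi> x1 y1 x2 y2))" for x y
      unfolding \<Phi>_def by (simp add: sw_swap[of c])
    then show ?thesis by simp
  qed
  finally show ?thesis .
qed


lemma linH_tests: "(\<And>l. lin l \<Longrightarrow> lin (\<lambda>x. l (g x))) \<Longrightarrow> linH g"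
proof (rule linHI)
  assume t: "\<And>l. lin l \<Longrightarrow> lin (\<lambda>x. l (g x))"
  fix x y c
  show "g (x + y) = g x + g y"
    by (rule sepH) (simp add: linD_add[OF t] linD_add)
  show "g (sH c x) = sH c (g x)"
    by (rule sepH) (simp add: linD_sc[OF t] linD_sc)
qed

lemma test_dop: "lin l \<Longrightarrow> l (dop a c) = sw a (\<lambda>x y. l (B1 x * c * S (B2 y)))"
  unfolding desc_op_def by (rule sw_push)
lemma test_sig: "lin l \<Longrightarrow> l (sig a) = sw a (\<lambda>x y. l (B1 x * S (B2 y)))"
  unfolding cocycle_def by (rule sw_push)

lemma linH_dop2: "linH (\<lambda>c. dop a c)"
proof (rule linH_tests)
  fix l assume ll: "lin l"
  note cc = lin_comp[OF ll]
  show "lin (\<lambda>x. l (dop a x))" unfolding test_dop[OF ll] by (intro lin_rules cc)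
qed
lemma linH_dop1: "linH (\<lambda>a. dop a c)"
proof (rule linH_tests)
  fix l assume ll: "lin l"
  note cc = lin_comp[OF ll]
  show "lin (\<lambda>x. l (dop x c))" unfolding test_dop[OF ll] by (intro lin_rules bilI cc)
qed
lemma linH_dopR: "linH g \<Longrightarrow> linH (\<lambda>x. dop a (g x))"
  using linH_dop2[of a] by (simp add: linH_def)
lemma linH_dopL: "linH g \<Longrightarrow> linH (\<lambda>x. dop (g x) c)"
  using linH_dop1[of c] by (simp add: linH_def)

lemma sig_dop: "sig a = dop a 1"
  by (simp add: cocycle_def desc_op_def)

lemma linH_sig: "linH sig"
proof -
  have "sig = (\<lambda>a. dop a 1)" by (rule ext) (simp add: sig_dop)
  then show ?thesis using linH_dop1[of 1] by simp
qed

lemma D_sig: assumes b: "bil \<phi>" shows "sw (sig a) \<phi> = sw a (\<lambda>x y. \<phi> (sig x) (sig y))"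
proof -
  note p1 = lin_phi1[OF b] and p2 = lin_phi2[OF b]
  have "bil (\<lambda>u v. \<phi> (dop x u) (dop y v))" for x y by (intro bilI p2 p1 linH_dopR linH_id)
  then show ?thesis unfolding sig_dop D_desc[OF b] by (simp add: sw_one)
qed

lemma B1_sig: "B1 (sig a) = B1 a"
  using RB1[of a 1] by (simp add: B1_one sig_dop)
lemma B2_sig: "B2 (sig a) = B2 a"
  using RB2[of a 1] by (simp add: B2_one sig_dop)

lemma dop_sig_left: "dop (sig a) c = dop a c"
proof (rule sepH)
  fix l assume ll: "lin l"
  note cc = lin_comp[OF ll]
  have bb: "bil (\<lambda>x1 x2. l (B1 x1 * c * S (B2 x2)))" by (intro bilI lin_rules cc)
  show "l (dop (sig a) c) = l (dop a c)"
    unfolding test_dop[OF ll] D_sig[OF bb] by (simp add: B1_sig B2_sig)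
qed

lemma dop_sig_right: "dop a (sig b) = sig (dop a b)"
proof (rule sepH)
  fix l assume ll: "lin l"
  note cc = lin_comp[OF ll]
  have bb: "bil (\<lambda>x y. l (B1 x * S (B2 y)))" by (intro bilI lin_rules cc)
  have "l (sig (dop a b)) = sw a (\<lambda>x y. sw b (\<lambda>u v. l (B1 (dop x u) * S (B2 (dop y v)))))"
    unfolding test_sig[OF ll] D_desc[OF bb] by simp
  also have "\<dots> = sw a (\<lambda>x y. sw b (\<lambda>u v. l (B1 x * (B1 u * S (B2 v)) * S (B2 y))))"
    by (simp add: RB1[symmetric] RB2[symmetric] S_antimult mult.assoc)
  also have "\<dots> = l (dop a (sig b))"
  proof -
    have "l (B1 x * sig b * S (B2 y)) = sw b (\<lambda>u v. l (B1 x * (B1 u * S (B2 v)) * S (B2 y)))" for x y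
    proof -
      have lg: "lin (\<lambda>h. l (B1 x * h * S (B2 y)))" by (intro lin_rules cc)
      show ?thesis unfolding cocycle_def sw_push[OF lg] by simp
    qed
    then show ?thesis unfolding test_dop[OF ll] by simp
  qed
  finally show "l (dop a (sig b)) = l (sig (dop a b))" by simp
qed

lemma H1_dop: "x \<in> H1 \<Delta> S B1 B2 \<Longrightarrow> y \<in> H1 \<Delta> S B1 B2 \<Longrightarrow> dop x y \<in> H1 \<Delta> S B1 B2"
  unfolding H1_def by (auto simp: dop_sig_left dop_sig_right)

lemma H1_add: "x \<in> H1 \<Delta> S B1 B2 \<Longrightarrow> y \<in> H1 \<Delta> S B1 B2 \<Longrightarrow> x + y \<in> H1 \<Delta> S B1 B2"
proof -
  assume "x \<in> H1 \<Delta> S B1 B2" "y \<in> H1 \<Delta> S B1 B2"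
  then obtain a b where "x = sig a" "y = sig b" unfolding H1_def by blast
  then have "x + y = sig (a + b)" using linHD_add[OF linH_sig] by simp
  then show ?thesis unfolding H1_def by simp
qed
lemma H1_sc: "x \<in> H1 \<Delta> S B1 B2 \<Longrightarrow> sH c x \<in> H1 \<Delta> S B1 B2"
proof -
  assume "x \<in> H1 \<Delta> S B1 B2"
  then obtain a where "x = sig a" unfolding H1_def by blast
  then have "sH c x = sig (sH c a)" using linHD_sc[OF linH_sig] by simp
  then show ?thesis unfolding H1_def by simp
qed

lemma S_one: "S 1 = 1"
proof (rule sepH)
  fix l assume ll: "lin l"
  note cc = lin_comp[OF ll]
  have bb: "bil (\<lambda>x y. l (S x * y))" by (intro bilI lin_rules cc)
  show "l (S 1) = l 1" using sw_ant_l[OF ll, of 1] sw_one[OF bb] by (simp add: eps_one)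
qed

lemma H1_one: "1 \<in> H1 \<Delta> S B1 B2"
proof -
  have "sig 1 = 1"
  proof (rule sepH)
    fix l assume ll: "lin l"
    note cc = lin_comp[OF ll]
    have bb: "bil (\<lambda>x y. l (B1 x * S (B2 y)))" by (intro bilI lin_rules cc)
    show "l (sig 1) = l 1" unfolding test_sig[OF ll] sw_one[OF bb] by (simp add: B1_one B2_one S_one)
  qed
  then show ?thesis unfolding H1_def by (metis rangeI)
qed


lemma BChar_hom:
  fixes sA :: "'k \<Rightarrow> 'a::comm_ring_1 \<Rightarrow> 'a" and B :: "'h \<Rightarrow> 'h"
  assumes A: "comm_k_algebra sA" and Bc: "coalg_hom sH \<Delta> \<epsilon> B" and B1': "B 1 = 1"
    and BRB: "\<And>a b. B a * B b = B (dop a b)"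
  shows "BChar \<Delta> S B1 B2 B \<in> hom (CharH sH \<Delta> \<epsilon> sA) (CharHB sH \<Delta> \<epsilon> S B1 B2 sA)"
proof -
  have vsA: "vector_space sA" using A by (simp add: comm_k_algebra_def k_algebra_def)
  have scA1: "sA c x * y = sA c (x * y)" for c x y using A by (simp add: comm_k_algebra_def k_algebra_def)
  have scA2: "x * sA c y = sA c (x * y)" for c x y using A by (metis comm_k_algebra_def k_algebra_def)
  have linB: "linH B" using Bc linH_iff by (simp add: coalg_hom_def)
  have BRB': "B (dop a b) = B a * B b" for a b by (simp add: BRB)
  let ?H1 = "H1 \<Delta> S B1 B2"
  have fprops: "(\<forall>x y. f (x + y) = f x + f y) \<and> (\<forall>c x. f (sH c x) = sA c (f x)) \<and> (\<forall>a b. f (a * b) = f a * f b) \<and> f 1 = 1"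
    if f: "f \<in> carrier (CharH sH \<Delta> \<epsilon> sA)" for f
    using f by (auto simp: CharH_def Vector_Spaces.linear_iff)
  have carr: "BChar \<Delta> S B1 B2 B f \<in> carrier (CharHB sH \<Delta> \<epsilon> S B1 B2 sA)"
    if f: "f \<in> carrier (CharH sH \<Delta> \<epsilon> sA)" for f
  proof -
    have fp: "f (x + y) = f x + f y" "f (sH c x) = sA c (f x)" "f (a * b) = f a * f b" "f 1 = 1" for x y c a b
      using fprops[OF f] by auto
    show ?thesis unfolding CharHB_def BChar_def using H1_add H1_sc H1_dop H1_one
      by (simp add: fp linHD_add[OF linB] linHD_sc[OF linB] BRB' B1')
  qed
  have mult: "BChar \<Delta> S B1 B2 B (conv \<Delta> f g) = convB sH \<Delta> S B1 B2 (BChar \<Delta> S B1 B2 B f) (BChar \<Delta> S B1 B2 B g)"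
    if f: "f \<in> carrier (CharH sH \<Delta> \<epsilon> sA)" and g: "g \<in> carrier (CharH sH \<Delta> \<epsilon> sA)" for f g
  proof (rule ext)
    fix a
    have fp: "f (x + y) = f x + f y" "f (sH c x) = sA c (f x)" for x y c
      using fprops[OF f] by auto
    have gp: "g (x + y) = g x + g y" "g (sH c x) = sA c (g x)" for x y c
      using fprops[OF g] by auto
    show "BChar \<Delta> S B1 B2 B (conv \<Delta> f g) a = convB sH \<Delta> S B1 B2 (BChar \<Delta> S B1 B2 B f) (BChar \<Delta> S B1 B2 B g) a"
    proof (cases "a \<in> ?H1")
      case False then show ?thesis by (simp add: BChar_def convB_def)
    next
      case True
      define LHS where "LHS = conv \<Delta> f g (B a)"
      have key: "sum_list (map (\<lambda>(x, y). BChar \<Delta> S B1 B2 B f x * BChar \<Delta> S B1 B2 B g y) T) = LHS"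
        if T: "set T \<subseteq> ?H1 \<times> ?H1" "teq2 sH T (\<Delta> a)" for T
      proof -
        have e1: "sum_list (map (\<lambda>(x, y). BChar \<Delta> S B1 B2 B f x * BChar \<Delta> S B1 B2 B g y) T) =
                  sum_list (map (\<lambda>(x, y). f (B x) * g (B y)) T)"
          using T(1) by (induction T) (auto simp: BChar_def)
        have "sum_list (map (\<lambda>(x, y). f (B x) * g (B y)) T) = LHS"
        proof (rule sep_lemma[OF vsA])
          fix l assume ll: "Vector_Spaces.linear sA (*) l"
          then have ladd: "\<And>x y. l (x + y) = l x + l y" and lsc: "\<And>c x. l (sA c x) = c * l x"
            by (auto simp: Vector_Spaces.linear_iff)
          define \<psi> where "\<psi> = (\<lambda>x y. l (f x * g y))"
          have b\<psi>: "bil \<psi>" unfolding \<psi>_def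
            by (intro bilI linI) (simp_all add: fp gp distrib_left distrib_right ladd lsc scA1 scA2)
          have b\<psi>B: "bil (\<lambda>x y. \<psi> (B x) (B y))"
            by (intro bilI lin_comp[OF bilD1[OF b\<psi>]] lin_comp[OF bilD2[OF b\<psi>]] linB)
          have "l (sum_list (map (\<lambda>(x, y). f (B x) * g (B y)) T)) = sum_list (map (\<lambda>(x, y). \<psi> (B x) (B y)) T)"
            using sumlist_additive[of l, OF ladd] by (simp add: \<psi>_def)
          also have "\<dots> = sw a (\<lambda>x y. \<psi> (B x) (B y))" unfolding sw_def by (rule sw_teq[OF T(2) b\<psi>B])
          also have "\<dots> = sw (B a) \<psi>" by (rule sw_coalg[OF Bc b\<psi>, symmetric])
          also have "\<dots> = l LHS" unfolding LHS_def conv_def sw_def \<psi>_def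
            by (rule sumlist_additive[of l, OF ladd, symmetric])
          finally show "l (sum_list (map (\<lambda>(x, y). f (B x) * g (B y)) T)) = l LHS" .
        qed
        with e1 show ?thesis by simp
      qed
      obtain c where ac: "a = sig c" using True unfolding H1_def by blast
      define T0 where "T0 = map (\<lambda>(x, y). (sig x, sig y)) (\<Delta> c)"
      have T01: "set T0 \<subseteq> ?H1 \<times> ?H1" unfolding T0_def H1_def by auto
      have T02: "teq2 sH T0 (\<Delta> a)"
        unfolding teq2_def bil_iff T0_def sum_pairs_map2 ac using D_sig unfolding sw_def by simp
      have "convB sH \<Delta> S B1 B2 (BChar \<Delta> S B1 B2 B f) (BChar \<Delta> S B1 B2 B g) a = LHS"
        unfolding convB_def using True
        apply simp
        apply (rule someI2_ex)
        using T01 T02 apply blast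
        using key by blast
      moreover have "BChar \<Delta> S B1 B2 B (conv \<Delta> f g) a = LHS"
        using True by (simp add: BChar_def LHS_def)
      ultimately show ?thesis by simp
    qed
  qed
  show ?thesis unfolding hom_def using carr mult by (auto simp: CharH_def CharHB_def)
qed

end

theorem mainTheorem11:
  fixes sH :: "'k::field_char_0 \<Rightarrow> 'h::ring_1 \<Rightarrow> 'h"
    and \<Delta> :: "'h \<Rightarrow> ('h \<times> 'h) list" and \<epsilon> :: "'h \<Rightarrow> 'k"
    and S B1 B2 :: "'h \<Rightarrow> 'h"
    and sA :: "'k \<Rightarrow> 'a::comm_ring_1 \<Rightarrow> 'a"
  assumes "rota_baxter_system sH \<Delta> \<epsilon> S B1 B2"
    and "comm_k_algebra sA"
  shows "BChar \<Delta> S B1 B2 B1 \<in> hom (CharH sH \<Delta> \<epsilon> sA) (CharHB sH \<Delta> \<epsilon> S B1 B2 sA) \<and>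
         BChar \<Delta> S B1 B2 B2 \<in> hom (CharH sH \<Delta> \<epsilon> sA) (CharHB sH \<Delta> \<epsilon> S B1 B2 sA)"
proof -
  interpret RBS sH \<Delta> \<epsilon> S B1 B2 by unfold_locales (rule assms(1))
  show ?thesis
    using BChar_hom[OF assms(2) B1_coalg B1_one RB1] BChar_hom[OF assms(2) B2_coalg B2_one RB2] by blast
qed

end
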